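(* Consider the behaviorally coupled two-pathogen model described in the context, with spillover constant $s\in[0,1]$, and assume $\mathcal{R}_{0,A}>\mathcal{R}_{0,B}>1$. Let $\bar I_A>0$ be the infectious level of disease $A$ at the disease-$B$-free boundary equilibrium, i.e. the unique positive solution of $e^{k I}=\beta_{0,A}\tau_I-\beta_{0,A}(\tau_I+\tau_R)I$. Suppose that disease $B$ is excluded at this equilibrium in the sense that $$\mathcal{R}_{0,B}<\frac{e^{k\bar I_A}}{e^{k\bar I_A}-s\left(e^{k\bar I_A}-1\right)}.$$ Then $$s> s_{\text{threshold}}:=\frac{1-\frac{1}{\mathcal{R}_{0,B}}}{1-\frac{1}{\mathcal{R}_{0,A}}}.$$
   Context: Model: for $i\in\{A,B\}$ with $j$ denoting the other disease, state variables $S_i,I_i,R_i,\widetilde I_i$ (proportions of the population susceptible, infectious, recovered and "perceived infectious" for disease $i$) satisfy $\dot S_i=-\beta_i S_iI_i+R_i/\tau_R$, $\dot I_i=\beta_iS_iI_i-I_i/\tau_I$, $\dot R_i=I_i/\tau_I-R_i/\tau_R$, $\dot{\widetilde I}_i=(I_i-\widetilde I_i)/\tau_P$, with $S_i+I_i+R_i=1$, where the transmission rate is $\beta_i=\beta_{0,i}\,e^{-k\widetilde I_i}\bigl(1-s(1-e^{-k\widetilde I_j})\bigr)$. All parameters $\beta_{0,A},\beta_{0,B},\tau_I,\tau_R,\tau_P,k$ are positive, and $s\in[0,1]$ is the spillover constant ($s=0$: no spillover, so $\beta_i=\beta_{0,i}e^{-k\widetilde I_i}$; $s=1$: perfect spillover,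 so $\beta_i=\beta_{0,i}e^{-k(\widetilde I_A+\widetilde I_B)}$; $0<s<1$: imperfect spillover). The basic reproduction numbers are $\mathcal{R}_{0,i}=\beta_{0,i}\tau_I$. The disease-$B$-free (disease-$A$ boundary) equilibrium is $(S_A,I_A,R_A,\widetilde I_A,S_B,I_B,R_B,\widetilde I_B)=(1-\bar I_A-\tfrac{\tau_R}{\tau_I}\bar I_A,\ \bar I_A,\ \tfrac{\tau_R}{\tau_I}\bar I_A,\ \bar I_A,\ 1,0,0,0)$. *)

theory Defs
  imports Complex_Main
begin

definition R0 :: "real \<Rightarrow> real \<Rightarrow> real" where
  "R0 beta0 tauI = beta0 * tauI"

definition boundary_level :: "real \<Rightarrow> real \<Rightarrow> real \<Rightarrow> real \<Rightarrow> real \<Rightarrow> bool" where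
  "boundary_level beta0A tauI tauR k I \<longleftrightarrow>
     I > 0 \<and> exp (k * I) = beta0A * tauI - beta0A * (tauI + tauR) * I"

definition s_threshold :: "real \<Rightarrow> real \<Rightarrow> real" where
  "s_threshold R0A R0B = (1 - 1 / R0B) / (1 - 1 / R0A)"

end

theory Submission
  imports Defs
begin

theorem theorem1:
  fixes beta0A beta0B tauI tauR tauP k s Ibar :: real
  assumes "beta0A > 0" "beta0B > 0" "tauI > 0" "tauR > 0" "tauP > 0" "k > 0"
    and "0 \<le> s" "s \<le> 1"
    and "R0 beta0A tauI > R0 beta0B tauI" "R0 beta0B tauI > 1"
    and "boundary_level beta0A tauI tauR k Ibar"
    and "R0 beta0B tauI < exp (k * Ibar) / (exp (k * Ibar) - s * (exp (k * Ibar) - 1))"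
  shows "s > s_threshold (R0 beta0A tauI) (R0 beta0B tauI)"
proof -
  define E where "E = exp (k * Ibar)"
  define A where "A = R0 beta0A tauI"
  define B where "B = R0 beta0B tauI"
  have I: "Ibar > 0" and Eq: "E = A - beta0A * (tauI + tauR) * Ibar"
    using assms(11) by (auto simp: boundary_level_def E_def A_def R0_def)
  have "k * Ibar > 0" using I assms(6) by simp
  hence E1: "E > 1" unfolding E_def by simp
  have "beta0A * (tauI + tauR) * Ibar > 0" using I assms(1,3,4) by simp
  hence EA: "E < A" using Eq by linarith
  have B1: "B > 1" "A > B" using assms(9,10) by (auto simp: A_def B_def)
  have Dpos: "E - s * (E - 1) \<ge> 1"
  proof -
    have "s * (E - 1) \<le> 1 * (E - 1)" using assms(8) E1 by (intro mult_right_mono) auto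
    thus ?thesis by simp
  qed
  have "B < E / (E - s * (E - 1))" using assms(12) by (simp add: E_def B_def)
  hence "B * (E - s * (E - 1)) < E" using Dpos by (simp add: pos_less_divide_eq)
  hence key: "(B - 1) * E < s * B * (E - 1)" by (simp add: algebra_simps)
  have "(B - 1) * A * (E - 1) < (B - 1) * E * (A - 1)"
  proof -
    have "A * (E - 1) < E * (A - 1)" using EA by (simp add: algebra_simps)
    thus ?thesis using B1 by (simp add: mult.assoc)
  qed
  also have "\<dots> < s * B * (E - 1) * (A - 1)"
    using key B1 by (intro mult_strict_right_mono) auto
  finally have "(B - 1) * A < s * B * (A - 1)"
    using E1 by (simp add: mult.commute mult.left_commute)
  hence "(B - 1) * A / (B * (A - 1)) < s"
    using B1 by (simp add: pos_divide_less_eq mult.commute mult.left_commute)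
  moreover have "s_threshold A B = (B - 1) * A / (B * (A - 1))"
    using B1 unfolding s_threshold_def by (simp add: field_simps)
  ultimately show ?thesis by (simp add: A_def B_def)
qed

end
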